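(* Let $G$ be a brick and let $X,Y\subseteq V(G)$ be such that $\overline{X}$ and $\overline{Y}$ are nonempty and disjoint, $G/X$ and $G/Y$ are bricks, and the graph $H=(G/(\overline{X}\to\overline{x}))/(\overline{Y}\to\overline{y})$ is a bipartite matching covered graph. Then every edge of $H$ incident with $\overline{x}$ is removable in $H$.
   Context: Graphs are finite and loopless; multiple edges allowed. For $X\subseteq V(G)$, $\overline{X}=V(G)\setminus X$ and $\partial(X)$ is the set of edges with exactly one end in $X$. $G/(X\to x)$ (or $G/X$) is obtained by identifying all vertices of $X$ into a new vertex $x$ and deleting edges with both ends in $X$. A graph is matching covered if it is connected, has at least two vertices, and every edge lies in a perfect matching. A cut $\partial(X)$ is tight if every perfect matching contains exactly one of its edges, trivial if $|X|=1$ or $|\overline{X}|=1$. A brick is a nonbipartite matching covered graph all of whose tight cuts are trivial. An edge $e$ of a matching covered graph $H$ is removable if $H-e$ is matching covered. *)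

theory Defs
  imports Main
begin

text \<open>Finite loopless multigraphs: a vertex set, an edge set (edges are abstract
  objects, so parallel edges are allowed), and an endpoint map.\<close>

record ('v, 'e) mgraph =
  verts :: "'v set"
  edges :: "'e set"
  ends  :: "'e \<Rightarrow> 'v set"

definition wf_graph :: "('v, 'e) mgraph \<Rightarrow> bool" where
  "wf_graph G \<longleftrightarrow> finite (verts G) \<and> finite (edges G) \<and>
     (\<forall>e\<in>edges G. ends G e \<subseteq> verts G \<and> card (ends G e) = 2)"

definition cut :: "('v, 'e) mgraph \<Rightarrow> 'v set \<Rightarrow> 'e set" where
  "cut G X = {e \<in> edges G. card (ends G e \<inter> X) = 1}"

definition adj :: "('v, 'e) mgraph \<Rightarrow> ('v \<times> 'v) set" where
  "adj G = {(u, v). \<exists>e\<in>edges G. ends G e = {u, v}}"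

definition connected_graph :: "('v, 'e) mgraph \<Rightarrow> bool" where
  "connected_graph G \<longleftrightarrow> verts G \<noteq> {} \<and>
     (\<forall>u\<in>verts G. \<forall>v\<in>verts G. (u, v) \<in> (adj G)\<^sup>*)"

definition perfect_matching :: "('v, 'e) mgraph \<Rightarrow> 'e set \<Rightarrow> bool" where
  "perfect_matching G M \<longleftrightarrow> M \<subseteq> edges G \<and>
     (\<forall>v\<in>verts G. \<exists>!e. e \<in> M \<and> v \<in> ends G e)"

definition matching_covered :: "('v, 'e) mgraph \<Rightarrow> bool" where
  "matching_covered G \<longleftrightarrow> wf_graph G \<and> connected_graph G \<and> card (verts G) \<ge> 2 \<and>
     (\<forall>e\<in>edges G. \<exists>M. perfect_matching G M \<and> e \<in> M)"

definition bipartite :: "('v, 'e) mgraph \<Rightarrow> bool" where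
  "bipartite G \<longleftrightarrow> (\<exists>A. A \<subseteq> verts G \<and> (\<forall>e\<in>edges G. card (ends G e \<inter> A) = 1))"

definition tight_cut :: "('v, 'e) mgraph \<Rightarrow> 'v set \<Rightarrow> bool" where
  "tight_cut G X \<longleftrightarrow> (\<forall>M. perfect_matching G M \<longrightarrow> card (M \<inter> cut G X) = 1)"

definition trivial_cut :: "('v, 'e) mgraph \<Rightarrow> 'v set \<Rightarrow> bool" where
  "trivial_cut G X \<longleftrightarrow> card X = 1 \<or> card (verts G - X) = 1"

definition brick :: "('v, 'e) mgraph \<Rightarrow> bool" where
  "brick G \<longleftrightarrow> matching_covered G \<and> \<not> bipartite G \<and>
     (\<forall>X. X \<subseteq> verts G \<longrightarrow> tight_cut G X \<longrightarrow> trivial_cut G X)"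

text \<open>Contraction \<open>G/(X \<rightarrow> x)\<close>: old vertices outside X become \<open>Some v\<close>, the new
  vertex x is \<open>None\<close>; edges with both ends in X are deleted.\<close>
definition contract :: "('v, 'e) mgraph \<Rightarrow> 'v set \<Rightarrow> ('v option, 'e) mgraph" where
  "contract G X =
     \<lparr> verts = Some ` (verts G - X) \<union> {None},
       edges = {e \<in> edges G. \<not> ends G e \<subseteq> X},
       ends = (\<lambda>e. (\<lambda>v. if v \<in> X then None else Some v) ` ends G e) \<rparr>"

definition delete_edge :: "('v, 'e) mgraph \<Rightarrow> 'e \<Rightarrow> ('v, 'e) mgraph" where
  "delete_edge G e = G\<lparr> edges := edges G - {e} \<rparr>"

definition removable :: "('v, 'e) mgraph \<Rightarrow> 'e \<Rightarrow> bool" where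
  "removable G e \<longleftrightarrow> matching_covered (delete_edge G e)"

end

theory Submission
  imports Defs
begin


lemma hall_aux:
  "\<And>I N. card I = n \<Longrightarrow> finite I \<Longrightarrow> (\<forall>i\<in>I. finite (N i)) \<Longrightarrow>
    (\<forall>J\<subseteq>I. card J \<le> card (\<Union>(N ` J))) \<Longrightarrow>
    \<exists>g. inj_on g I \<and> (\<forall>i\<in>I. g i \<in> N i)"
proof (induction n rule: less_induct)
  case (less n I N)
  show ?case
  proof (cases "I = {}")
    case True then show ?thesis by auto
  next
    case False
    have finU: "\<And>J. J \<subseteq> I \<Longrightarrow> finite (\<Union>(N ` J))"
      using less.prems(2,3) by (meson finite_UN_I finite_subset subsetD)
    show ?thesis
    proof (cases "\<exists>J. J \<subseteq> I \<and> J \<noteq> {} \<and> J \<noteq> I \<and> card (\<Union>(N ` J)) = card J")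
      case True
      then obtain J where J: "J \<subseteq> I" "J \<noteq> {}" "J \<noteq> I" "card (\<Union>(N ` J)) = card J" by blast
      have fJ: "finite J" using J(1) less.prems(2) finite_subset by blast
      have cJ: "card J < n" using J less.prems(1,2) by (metis psubsetI psubset_card_mono)
      have h1: "\<forall>i\<in>J. finite (N i)" using less.prems(3) J(1) by blast
      have h2: "\<forall>K\<subseteq>J. card K \<le> card (\<Union>(N ` K))" using less.prems(4) J(1) by (meson subset_trans)
      obtain g1 where g1: "inj_on g1 J" "\<forall>i\<in>J. g1 i \<in> N i"
        using less.IH[OF cJ refl fJ h1 h2] by blast
      define N2 where "N2 = (\<lambda>i. N i - \<Union>(N ` J))"
      define I2 where "I2 = I - J"
      have fI2: "finite I2" using less.prems(2) I2_def by auto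
      have cI2: "card I2 < n" using J less.prems(1,2) I2_def
        by (metis Diff_subset card_Diff_subset card_gt_0_iff diff_less finite_subset subset_empty)
      have hall2: "\<forall>K\<subseteq>I2. card K \<le> card (\<Union>(N2 ` K))"
      proof (intro allI impI)
        fix K assume K: "K \<subseteq> I2"
        have KJ: "K \<union> J \<subseteq> I" "K \<inter> J = {}" using K J(1) I2_def by auto
        have "card K + card J = card (K \<union> J)"
          using KJ less.prems(2) card_Un_disjoint[of K J] finite_subset[of K I] finite_subset[of J I] by auto
        also have "\<dots> \<le> card (\<Union>(N ` (K \<union> J)))" using less.prems(4) KJ by blast
        also have "\<Union>(N ` (K \<union> J)) = \<Union>(N2 ` K) \<union> \<Union>(N ` J)" unfolding N2_def by auto
        also have "card (\<Union>(N2 ` K) \<union> \<Union>(N ` J)) = card (\<Union>(N2 ` K)) + card (\<Union>(N ` J))"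
          apply (rule card_Un_disjoint)
          using finU[of K] finU[OF J(1)] KJ unfolding N2_def by (auto intro: finite_subset)
        finally show "card K \<le> card (\<Union>(N2 ` K))" using J(4) by simp
      qed
      obtain g2 where g2: "inj_on g2 I2" "\<forall>i\<in>I2. g2 i \<in> N2 i"
        using less.IH[OF cI2 refl fI2 _ hall2] less.prems(3) unfolding N2_def I2_def by auto
      define g where "g = (\<lambda>i. if i \<in> J then g1 i else g2 i)"
      have "inj_on g I"
      proof (rule inj_onI)
        fix a b assume ab: "a \<in> I" "b \<in> I" "g a = g b"
        show "a = b"
        proof (cases "a \<in> J"; cases "b \<in> J")
          assume "a \<in> J" "b \<in> J" then show ?thesis using ab g1(1) g_def by (auto dest: inj_onD)
        next
          assume "a \<notin> J" "b \<notin> J" then show ?thesis using ab g2(1) g_def I2_def by (auto dest: inj_onD)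
        next
          assume a: "a \<in> J" "b \<notin> J"
          have "g2 b \<in> N2 b" using g2(2) ab(2) a(2) I2_def by blast
          then have "g b \<in> N2 b" using a g_def by simp
          moreover have "g a \<in> N a" using g1 a g_def by auto
          ultimately show ?thesis using ab a N2_def by auto
        next
          assume a: "a \<notin> J" "b \<in> J"
          have "g2 a \<in> N2 a" using g2(2) ab(1) a(1) I2_def by blast
          then have "g a \<in> N2 a" using a g_def by simp
          moreover have "g b \<in> N b" using g1 a g_def by auto
          ultimately show ?thesis using ab a N2_def by auto
        qed
      qed
      moreover have "\<forall>i\<in>I. g i \<in> N i" using g1 g2 unfolding g_def N2_def I2_def by auto
      ultimately show ?thesis by blast
    next
      case False
      then have strict: "\<And>J. J \<subseteq> I \<Longrightarrow> J \<noteq> {} \<Longrightarrow> J \<noteq> I \<Longrightarrow> card J < card (\<Union>(N ` J))"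
        using less.prems(4) by (metis le_neq_implies_less)
      obtain a where a: "a \<in> I" using \<open>I \<noteq> {}\<close> by blast
      have "card {a} \<le> card (\<Union>(N ` {a}))" using less.prems(4) a by blast
      then have "1 \<le> card (\<Union>(N ` {a}))" by simp
      then have "N a \<noteq> {}" by auto
      then obtain y where y: "y \<in> N a" by blast
      define N2 where "N2 = (\<lambda>i. N i - {y})"
      define I2 where "I2 = I - {a}"
      have fI2: "finite I2" using less.prems(2) I2_def by auto
      have cI2: "card I2 < n" using a less.prems(1,2) I2_def
        by (metis card_Diff1_less)
      have hall2: "\<forall>K\<subseteq>I2. card K \<le> card (\<Union>(N2 ` K))"
      proof (intro allI impI)
        fix K assume K: "K \<subseteq> I2"
        show "card K \<le> card (\<Union>(N2 ` K))"
        proof (cases "K = {}")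
          case True then show ?thesis by simp
        next
          case False
          have KI: "K \<subseteq> I" "K \<noteq> I" using K a I2_def by auto
          have "card K < card (\<Union>(N ` K))" using strict[OF KI(1) False KI(2)] .
          moreover have "\<Union>(N2 ` K) = \<Union>(N ` K) - {y}" unfolding N2_def by auto
          moreover have "card (\<Union>(N ` K) - {y}) \<ge> card (\<Union>(N ` K)) - 1"
            using diff_card_le_card_Diff[of "{y}" "\<Union>(N ` K)"] finU[OF KI(1)] by simp
          ultimately show ?thesis by simp
        qed
      qed
      obtain g2 where g2: "inj_on g2 I2" "\<forall>i\<in>I2. g2 i \<in> N2 i"
        using less.IH[OF cI2 refl fI2 _ hall2] less.prems(3) unfolding N2_def I2_def by auto
      define g where "g = (\<lambda>i. if i = a then y else g2 i)"
      have "inj_on g I"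
      proof (rule inj_onI)
        fix p q assume pq: "p \<in> I" "q \<in> I" "g p = g q"
        show "p = q"
          using pq g2 unfolding g_def I2_def N2_def
          by (smt (verit, ccfv_threshold) DiffE DiffI inj_on_def singletonD singletonI)
      qed
      moreover have "\<forall>i\<in>I. g i \<in> N i" using g2 y unfolding g_def N2_def I2_def by auto
      ultimately show ?thesis by blast
    qed
  qed
qed

lemma hall:
  "finite I \<Longrightarrow> (\<forall>i\<in>I. finite (N i)) \<Longrightarrow> (\<forall>J\<subseteq>I. card J \<le> card (\<Union>(N ` J))) \<Longrightarrow>
    \<exists>g. inj_on g I \<and> (\<forall>i\<in>I. g i \<in> N i)"
  using hall_aux by blast




lemma wf_edge:
  assumes "wf_graph K" "g \<in> edges K"
  shows "ends K g \<subseteq> verts K" "card (ends K g) = 2" "finite (ends K g)"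
  using assms unfolding wf_graph_def by (auto intro: card_ge_0_finite)

lemma card_ends_int:
  assumes "card (E::'a set) = 2"
  shows "card (E \<inter> U) = (if E \<subseteq> U then 2 else 0) + (if card (E \<inter> U) = 1 then 1 else 0)"
proof -
  have fE: "finite E" using assms by (intro card_ge_0_finite) auto
  show ?thesis
  proof (cases "E \<subseteq> U")
    case True then show ?thesis using assms by (simp add: Int_absorb2)
  next
    case False
    then have "E \<inter> U \<subset> E" by auto
    then have "card (E \<inter> U) < 2" using psubset_card_mono[OF fE] assms by metis
    then show ?thesis using False by auto
  qed
qed

lemma degsum:
  assumes wf: "wf_graph K" and F: "F \<subseteq> edges K" and U: "U \<subseteq> verts K"
  shows "(\<Sum>w\<in>U. card {g\<in>F. w \<in> ends K g}) =
         2 * card {g\<in>F. ends K g \<subseteq> U} + card (F \<inter> cut K U)"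
proof -
  have fV: "finite (verts K)" "finite (edges K)" using wf unfolding wf_graph_def by auto
  have fU: "finite U" using U fV finite_subset by blast
  have fF: "finite F" using F fV finite_subset by blast
  have "(\<Sum>w\<in>U. card {g\<in>F. w \<in> ends K g}) = (\<Sum>w\<in>U. \<Sum>g\<in>F. if w \<in> ends K g then 1 else 0)"
    using fF by (simp add: sum.inter_filter[symmetric])
  also have "\<dots> = (\<Sum>g\<in>F. \<Sum>w\<in>U. if w \<in> ends K g then 1 else 0)" by (rule sum.swap)
  also have "\<dots> = (\<Sum>g\<in>F. card (ends K g \<inter> U))"
  proof (rule sum.cong[OF refl])
    fix g assume "g \<in> F"
    have "(\<Sum>w\<in>U. if w \<in> ends K g then 1 else 0) = card {w\<in>U. w \<in> ends K g}"
      using fU by (simp add: sum.inter_filter[symmetric])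
    also have "{w\<in>U. w \<in> ends K g} = ends K g \<inter> U" by auto
    finally show "(\<Sum>w\<in>U. if w \<in> ends K g then 1 else 0) = card (ends K g \<inter> U)" .
  qed
  also have "\<dots> = (\<Sum>g\<in>F. (if ends K g \<subseteq> U then 2 else 0) + (if card (ends K g \<inter> U) = 1 then 1 else 0))"
    apply (rule sum.cong[OF refl])
    apply (rule card_ends_int)
    using wf_edge[OF wf] F by blast
  also have "\<dots> = (\<Sum>g\<in>F. (if ends K g \<subseteq> U then 2 else 0)) + (\<Sum>g\<in>F. (if card (ends K g \<inter> U) = 1 then 1 else 0))"
    by (rule sum.distrib)
  also have "\<dots> = (\<Sum>g\<in>{g\<in>F. ends K g \<subseteq> U}. 2) + (\<Sum>g\<in>{g\<in>F. card (ends K g \<inter> U) = 1}. 1)"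
    by (simp only: sum.inter_filter[OF fF])
  also have "\<dots> = 2 * card {g\<in>F. ends K g \<subseteq> U} + card {g\<in>F. card (ends K g \<inter> U) = 1}"
    by simp
  also have "{g\<in>F. card (ends K g \<inter> U) = 1} = F \<inter> cut K U"
    using F unfolding cut_def by auto
  finally show ?thesis .
qed

lemma pm_deg:
  assumes "perfect_matching K M" "w \<in> verts K"
  shows "card {g\<in>M. w \<in> ends K g} = 1"
proof -
  have "\<forall>v\<in>verts K. \<exists>!e. e \<in> M \<and> v \<in> ends K e"
    using assms(1) unfolding perfect_matching_def by (rule conjunct2)
  then have "\<exists>!e. e \<in> M \<and> w \<in> ends K e" using assms(2) by simp
  then obtain g where g: "g \<in> M \<and> w \<in> ends K g" "\<forall>h. h \<in> M \<and> w \<in> ends K h \<longrightarrow> h = g"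
    unfolding Ex1_def by blast
  have "{g\<in>M. w \<in> ends K g} = {g}" using g by blast
  then show ?thesis by simp
qed

lemma pm_count:
  assumes wf: "wf_graph K" and pm: "perfect_matching K M" and U: "U \<subseteq> verts K"
  shows "card U = 2 * card {g\<in>M. ends K g \<subseteq> U} + card (M \<inter> cut K U)"
proof -
  have "(\<Sum>w\<in>U. card {g\<in>M. w \<in> ends K g}) = (\<Sum>w\<in>U. 1)"
    using pm_deg[OF pm] U by (intro sum.cong) auto
  then show ?thesis using degsum[OF wf _ U, of M] pm unfolding perfect_matching_def by simp
qed

lemma pm_even:
  assumes wf: "wf_graph K" and pm: "perfect_matching K M"
  shows "even (card (verts K))"
proof -
  have "cut K (verts K) = {}"
  proof -
    { fix g assume g: "g \<in> edges K" "card (ends K g \<inter> verts K) = 1"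
      have "ends K g \<inter> verts K = ends K g" using wf_edge(1)[OF wf g(1)] by blast
      then have False using g wf_edge(2)[OF wf g(1)] by simp }
    then show ?thesis unfolding cut_def by blast
  qed
  then show ?thesis using pm_count[OF wf pm order_refl] by simp
qed

lemma mc_pm:
  assumes "matching_covered K"
  shows "\<exists>M. perfect_matching K M"
proof -
  have c: "card (verts K) \<ge> 2" using assms unfolding matching_covered_def by auto
  then have fin: "finite (verts K)" by (metis card.infinite not_numeral_le_zero)
  have "verts K \<noteq> {}" using c by auto
  then obtain u where u: "u \<in> verts K" by blast
  have "\<not> verts K \<subseteq> {u}" using c card_mono[of "{u}" "verts K"] by auto
  then obtain v where "v \<in> verts K" "v \<noteq> u" by blast
  then have uv: "u \<in> verts K" "v \<in> verts K" "u \<noteq> v" using u by auto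
  then have "(u, v) \<in> (adj K)\<^sup>*" using assms unfolding matching_covered_def connected_graph_def by auto
  then obtain w where "(u, w) \<in> adj K" using uv(3) by (cases rule: converse_rtranclE) auto
  then obtain g where g: "g \<in> edges K" unfolding adj_def by auto
  have "\<forall>e\<in>edges K. \<exists>M. perfect_matching K M \<and> e \<in> M" using assms by (simp add: matching_covered_def)
  then obtain M where "perfect_matching K M" using g by blast
  then show ?thesis by blast
qed

lemma bip_other:
  assumes wf: "wf_graph K" and A: "\<forall>g\<in>edges K. card (ends K g \<inter> A) = 1"
  and g: "g \<in> edges K"
  shows "card (ends K g \<inter> (verts K - A)) = 1"
proof -
  have "ends K g \<inter> (verts K - A) = ends K g - (ends K g \<inter> A)" using wf_edge[OF wf g] by auto
  then show ?thesis using wf_edge[OF wf g] A g by (simp add: card_Diff_subset)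
qed

lemma bip_sum:
  assumes wf: "wf_graph K" and A: "\<forall>g\<in>edges K. card (ends K g \<inter> A) = 1" and AV: "A \<subseteq> verts K"
  and F: "F \<subseteq> edges K"
  shows "(\<Sum>w\<in>A. card {g\<in>F. w \<in> ends K g}) = card F"
proof -
  have e1: "{g\<in>F. ends K g \<subseteq> A} = {}"
  proof -
    { fix g assume "g \<in> F" "ends K g \<subseteq> A"
      then have "card (ends K g \<inter> A) = 2" using wf_edge[OF wf, of g] F by (auto simp: Int_absorb2)
      then have False using A F \<open>g\<in>F\<close> by auto }
    then show ?thesis by auto
  qed
  have e2: "F \<inter> cut K A = F" using A F unfolding cut_def by auto
  have "(\<Sum>w\<in>A. card {g\<in>F. w \<in> ends K g}) = 2 * card {g\<in>F. ends K g \<subseteq> A} + card (F \<inter> cut K A)"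
    by (rule degsum[OF wf F AV])
  also have "\<dots> = card F" by (simp only: e1 e2 card.empty mult_0_right add_0)
  finally show ?thesis .
qed




lemma contract_simps:
  "verts (contract G X) = Some ` (verts G - X) \<union> {None}"
  "edges (contract G X) = {e \<in> edges G. \<not> ends G e \<subseteq> X}"
  "ends (contract G X) e = (\<lambda>v. if v \<in> X then None else Some v) ` ends G e"
  by (simp_all add: contract_def)

lemma contract_bip1:
  assumes wf: "wf_graph G" and XV: "X \<subseteq> verts G" and c1: "card (verts G - X) = 1"
  shows "bipartite (contract G X)"
proof -
  obtain z where z: "verts G - X = {z}" using c1 card_1_singletonE by blast
  have "\<forall>e\<in>edges (contract G X). card (ends (contract G X) e \<inter> {None}) = 1"
  proof
    fix e assume e: "e \<in> edges (contract G X)"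
    then have eG: "e \<in> edges G" "\<not> ends G e \<subseteq> X" by (auto simp: contract_simps)
    obtain a b where ab: "ends G e = {a, b}" "a \<noteq> b"
      using wf_edge(2)[OF wf eG(1)] by (meson card_2_iff)
    have abV: "a \<in> verts G" "b \<in> verts G" using wf_edge(1)[OF wf eG(1)] ab by auto
    have "a \<in> X \<or> b \<in> X"
    proof (rule ccontr)
      assume "\<not> (a \<in> X \<or> b \<in> X)"
      then have "a \<in> {z}" "b \<in> {z}" using z abV by blast+
      then show False using ab by simp
    qed
    moreover have "a \<notin> X \<or> b \<notin> X" using eG(2) ab by auto
    ultimately have "None \<in> ends (contract G X) e" using ab by (auto simp: contract_simps)
    then have "ends (contract G X) e \<inter> {None} = {None}" by auto
    then show "card (ends (contract G X) e \<inter> {None}) = 1" by simp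
  qed
  moreover have "{None} \<subseteq> verts (contract G X)" by (simp add: contract_simps)
  ultimately show ?thesis unfolding bipartite_def by blast
qed

lemma brick_not_card1:
  assumes "brick (contract G X)" "wf_graph G" "X \<subseteq> verts G"
  shows "card (verts G - X) \<noteq> 1"
  using assms contract_bip1 unfolding brick_def by blast

lemma brick_wf: "brick K \<Longrightarrow> wf_graph K"
  unfolding brick_def matching_covered_def by blast

lemma brick_odd:
  assumes "brick (contract G X)" "wf_graph G"
  shows "odd (card (verts G - X))"
proof -
  have mc: "matching_covered (contract G X)" using assms(1) unfolding brick_def by blast
  obtain M where "perfect_matching (contract G X) M" using mc_pm[OF mc] by blast
  then have ev: "even (card (verts (contract G X)))" using pm_even brick_wf[OF assms(1)] by blast
  have f: "finite (verts G - X)" using assms(2) unfolding wf_graph_def by auto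
  have "card (verts (contract G X)) = card (verts G - X) + 1"
    unfolding contract_simps using f by (simp add: card_image)
  then show ?thesis using ev by simp
qed

lemma cut_odd:
  assumes wf: "wf_graph G" and pm: "perfect_matching G M" and U: "U \<subseteq> verts G" and o: "odd (card U)"
  shows "odd (card (M \<inter> cut G U))"
  using pm_count[OF wf pm U] o by simp

lemma tight_False:
  assumes brG: "brick G" and XV: "X \<subseteq> verts G" and YV: "Y \<subseteq> verts G"
    and Yne: "verts G - Y \<noteq> {}"
    and disj: "(verts G - X) \<inter> (verts G - Y) = {}"
    and brX: "brick (contract G X)" and brY: "brick (contract G Y)"
    and t: "tight_cut G (verts G - X)"
  shows False
proof -
  have wf: "wf_graph G" using brick_wf[OF brG] .
  have "trivial_cut G (verts G - X)" using brG t unfolding brick_def by blast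
  then have "card (verts G - X) = 1 \<or> card (verts G - (verts G - X)) = 1" unfolding trivial_cut_def .
  moreover have "card (verts G - X) \<noteq> 1" using brick_not_card1[OF brX wf XV] .
  ultimately have c: "card X = 1" using XV by (simp add: double_diff)
  have "verts G - Y \<subseteq> X" using disj YV by blast
  then have "verts G - Y = X" using c Yne by (metis card_1_singletonE subset_singletonD)
  then have "card (verts G - Y) = 1" using c by simp
  then show False using brick_not_card1[OF brY wf YV] by simp
qed




locale ctx =
  fixes G :: "('v, 'e) mgraph" and X Y :: "'v set"
  assumes brG: "brick G"
    and XV: "X \<subseteq> verts G" and YV: "Y \<subseteq> verts G"
    and Xne: "verts G - X \<noteq> {}" and Yne: "verts G - Y \<noteq> {}"
    and disj: "(verts G - X) \<inter> (verts G - Y) = {}"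
    and brX: "brick (contract G X)" and brY: "brick (contract G Y)"
    and bipH: "bipartite (contract (contract G (verts G - X)) (Some ` (verts G - Y)))"
    and mcH: "matching_covered (contract (contract G (verts G - X)) (Some ` (verts G - Y)))"
begin

definition "H = contract (contract G (verts G - X)) (Some ` (verts G - Y))"
definition "Xb = verts G - X"
definition "Yb = verts G - Y"
definition "phi v = (if v \<in> Xb then Some None else if v \<in> Yb then None else Some (Some v))"
abbreviation "xb \<equiv> (Some None :: 'v option option)"
abbreviation "yb \<equiv> (None :: 'v option option)"

lemma wfG: "wf_graph G" using brick_wf[OF brG] .
lemma finV: "finite (verts G)" "finite (edges G)" using wfG unfolding wf_graph_def by auto
lemma XbV: "Xb \<subseteq> verts G" and YbV: "Yb \<subseteq> verts G" and XYb: "Xb \<inter> Yb = {}"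
  using disj unfolding Xb_def Yb_def by auto
lemma Xbne: "Xb \<noteq> {}" and Ybne: "Yb \<noteq> {}" using Xne Yne unfolding Xb_def Yb_def by auto

lemma H_verts: "verts H = {xb, yb} \<union> Some ` Some ` (X \<inter> Y)"
proof -
  have e: "verts G - (verts G - X) = X" using XV by auto
  have "Some ` X \<union> {None} - Some ` (verts G - Y) = Some ` (X \<inter> Y) \<union> {None}" using XV by auto
  then show ?thesis unfolding H_def contract_simps e by auto
qed

lemma H_edges: "edges H = {g \<in> edges G. \<not> ends G g \<subseteq> Xb \<and> \<not> ends G g \<subseteq> Yb}"
proof -
  { fix g assume g: "g \<in> edges G" "\<not> ends G g \<subseteq> Xb"
    have "((\<lambda>v. if v \<in> Xb then None else Some v) ` ends G g \<subseteq> Some ` Yb) \<longleftrightarrow> ends G g \<subseteq> Yb"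
    proof
      assume h: "(\<lambda>v. if v \<in> Xb then None else Some v) ` ends G g \<subseteq> Some ` Yb"
      show "ends G g \<subseteq> Yb"
      proof
        fix v assume "v \<in> ends G g"
        then have "(if v \<in> Xb then None else Some v) \<in> Some ` Yb" using h by blast
        then show "v \<in> Yb" by (auto split: if_splits)
      qed
    next
      assume "ends G g \<subseteq> Yb" then show "(\<lambda>v. if v \<in> Xb then None else Some v) ` ends G g \<subseteq> Some ` Yb"
        using XYb by auto
    qed }
  note eqv = this
  show ?thesis unfolding H_def contract_simps Xb_def[symmetric] Yb_def[symmetric]
    apply (rule set_eqI)
    using eqv by (simp only: mem_Collect_eq) blast
qed

lemma H_ends: "ends H g = phi ` ends G g"
  unfolding H_def contract_simps Xb_def[symmetric] Yb_def[symmetric] image_image phi_def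
  using XYb by (intro image_cong) auto

lemma wfH: "wf_graph H" using mcH unfolding H_def matching_covered_def by blast

lemma phi_V: "v \<in> verts G \<Longrightarrow> phi v \<in> verts H"
  unfolding H_verts phi_def Xb_def Yb_def by auto

lemma phi_surj: "w \<in> verts H \<Longrightarrow> \<exists>v\<in>verts G. phi v = w"
proof -
  assume w: "w \<in> verts H"
  obtain a where a: "a \<in> Xb" using Xbne by blast
  obtain b where b: "b \<in> Yb" using Ybne by blast
  show ?thesis
  proof (cases "w = xb")
    case True then show ?thesis using a XbV unfolding phi_def by (intro bexI[of _ a]) auto
  next
    case False note F1 = this
    show ?thesis
    proof (cases "w = yb")
      case True then show ?thesis using b YbV XYb unfolding phi_def by (intro bexI[of _ b]) auto
    next
      case False
      then obtain v where "v \<in> X \<inter> Y" "w = Some (Some v)" using w F1 unfolding H_verts by auto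
      then show ?thesis using XV unfolding phi_def Xb_def Yb_def by (intro bexI[of _ v]) auto
    qed
  qed
qed

definition "lift U = {v \<in> verts G. phi v \<in> U}"

lemma lift_cut:
  assumes U: "U \<subseteq> verts H"
  shows "cut G (lift U) = cut H U"
proof -
  have "g \<in> cut G (lift U) \<longleftrightarrow> g \<in> cut H U" for g
  proof (cases "g \<in> edges G")
    case False then show ?thesis unfolding cut_def H_edges by auto
  next
    case True note gE = this
    obtain a b where ab: "ends G g = {a, b}" "a \<noteq> b"
      using wf_edge(2)[OF wfG gE] by (meson card_2_iff)
    have abV: "a \<in> verts G" "b \<in> verts G" using wf_edge(1)[OF wfG gE] ab by auto
    show ?thesis
    proof (cases "phi a = phi b")
      case True
      then have "ends G g \<subseteq> Xb \<or> ends G g \<subseteq> Yb" using ab(2) unfolding phi_def ab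
        by (auto split: if_splits)
      then have "g \<notin> cut H U" unfolding cut_def H_edges by auto
      moreover have "card (ends G g \<inter> lift U) \<noteq> 1"
      proof (cases "phi a \<in> U")
        case True
        then have "ends G g \<inter> lift U = {a, b}" using \<open>phi a = phi b\<close> abV unfolding ab lift_def by auto
        then show ?thesis using ab(2) by simp
      next
        case False
        then have "ends G g \<inter> lift U = {}" using \<open>phi a = phi b\<close> unfolding ab lift_def by auto
        then show ?thesis by simp
      qed
      ultimately show ?thesis unfolding cut_def by auto
    next
      case False
      have "a \<in> Yb \<Longrightarrow> b \<in> Yb \<Longrightarrow> phi a = phi b"
        using XYb unfolding phi_def by (auto simp: disjoint_iff)
      moreover have "a \<in> Xb \<Longrightarrow> b \<in> Xb \<Longrightarrow> phi a = phi b"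
        unfolding phi_def by auto
      ultimately have "\<not> ends G g \<subseteq> Xb \<and> \<not> ends G g \<subseteq> Yb" using False unfolding ab by auto
      then have gH: "g \<in> edges H" using gE unfolding H_edges by auto
      have "ends H g \<inter> U = phi ` (ends G g \<inter> lift U)"
        unfolding H_ends lift_def using abV ab by auto
      moreover have "inj_on phi (ends G g \<inter> lift U)" using False ab by (auto intro!: inj_onI)
      ultimately have "card (ends H g \<inter> U) = card (ends G g \<inter> lift U)" by (simp add: card_image)
      then show ?thesis unfolding cut_def using gE gH by auto
    qed
  qed
  then show ?thesis by blast
qed

lemma lift_card:
  assumes "U \<subseteq> verts H"
  shows "card U \<le> card (lift U)"
proof -
  have "U \<subseteq> phi ` lift U" using phi_surj assms unfolding lift_def by fastforce
  moreover have "finite (lift U)" using finV unfolding lift_def by auto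
  ultimately show ?thesis by (meson card_image_le card_mono finite_imageI le_trans)
qed

lemma lift_xb: "lift {xb} = Xb" unfolding lift_def phi_def using XbV by auto
lemma lift_yb: "lift {yb} = Yb" unfolding lift_def phi_def using YbV XYb by auto
lemma lift_mid: "v \<in> X \<inter> Y \<Longrightarrow> lift {Some (Some v)} = {v}"
  unfolding lift_def phi_def Xb_def Yb_def using XV by auto
lemma lift_compl: "verts G - lift U = lift (verts H - U)"
  unfolding lift_def using phi_V by auto

end


context ctx begin

definition "kx M = card (M \<inter> cut G Xb)"
definition "ky M = card (M \<inter> cut G Yb)"
definition "dH M w = card {g \<in> M \<inter> edges H. w \<in> ends H g}"

lemma XbX: "Xb = verts G - X" and YbY: "Yb = verts G - Y" by (simp_all add: Xb_def Yb_def)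

lemma tightX_False: "(\<And>M. perfect_matching G M \<Longrightarrow> kx M = 1) \<Longrightarrow> False"
  using tight_False[OF brG XV YV Yne disj brX brY] unfolding tight_cut_def kx_def XbX by blast

lemma tightY_False: "(\<And>M. perfect_matching G M \<Longrightarrow> ky M = 1) \<Longrightarrow> False"
  using tight_False[OF brG YV XV Xne _ brY brX] disj unfolding tight_cut_def ky_def YbY
  by (metis inf_commute)

lemma kx_odd: "perfect_matching G M \<Longrightarrow> odd (kx M)"
  unfolding kx_def using cut_odd[OF wfG _ XbV] brick_odd[OF brX wfG] XbX by simp

lemma ky_odd: "perfect_matching G M \<Longrightarrow> odd (ky M)"
  unfolding ky_def using cut_odd[OF wfG _ YbV] brick_odd[OF brY wfG] YbY by simp

lemma pmE: "perfect_matching G M \<Longrightarrow> M \<subseteq> edges G" unfolding perfect_matching_def by blast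

lemma d_mid:
  assumes pm: "perfect_matching G M" and v: "v \<in> X \<inter> Y"
  shows "dH M (Some (Some v)) = 1"
proof -
  have vn: "v \<notin> Xb" "v \<notin> Yb" "v \<in> verts G" using v XV unfolding Xb_def Yb_def by auto
  have phiv: "\<And>w. phi w = Some (Some v) \<longleftrightarrow> w = v" using vn unfolding phi_def by auto
  have "{g \<in> M \<inter> edges H. Some (Some v) \<in> ends H g} = {g \<in> M. v \<in> ends G g}"
  proof (intro set_eqI iffI)
    fix g assume "g \<in> {g \<in> M \<inter> edges H. Some (Some v) \<in> ends H g}"
    then obtain w where "g \<in> M" "w \<in> ends G g" "phi w = Some (Some v)" unfolding H_ends by auto
    then show "g \<in> {g \<in> M. v \<in> ends G g}" using phiv by auto
  next
    fix g assume g: "g \<in> {g \<in> M. v \<in> ends G g}"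
    then have "g \<in> edges H" unfolding H_edges using pmE[OF pm] vn by auto
    moreover have "Some (Some v) \<in> phi ` ends G g" using g phiv[of v] by (auto intro: rev_image_eqI)
    ultimately show "g \<in> {g \<in> M \<inter> edges H. Some (Some v) \<in> ends H g}" using g unfolding H_ends by auto
  qed
  then show ?thesis unfolding dH_def using pm_deg[OF pm vn(3)] by simp
qed

lemma meet_cut:
  assumes gE: "g \<in> edges G" and U: "U \<subseteq> verts G"
  shows "card (ends G g \<inter> U) = 1 \<longleftrightarrow> ends G g \<inter> U \<noteq> {} \<and> \<not> ends G g \<subseteq> U"
proof -
  have c2: "card (ends G g) = 2" and f: "finite (ends G g)" using wf_edge[OF wfG gE] by auto
  have eq: "card (ends G g \<inter> U) = (if ends G g \<subseteq> U then 2 else 0) + (if card (ends G g \<inter> U) = 1 then 1 else 0)"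
    using card_ends_int[OF c2] .
  show ?thesis
  proof
    assume "card (ends G g \<inter> U) = 1"
    then show "ends G g \<inter> U \<noteq> {} \<and> \<not> ends G g \<subseteq> U" using eq by (auto split: if_splits)
  next
    assume h: "ends G g \<inter> U \<noteq> {} \<and> \<not> ends G g \<subseteq> U"
    then have "card (ends G g \<inter> U) \<noteq> 0" using f by simp
    then show "card (ends G g \<inter> U) = 1" using eq h by (auto split: if_splits)
  qed
qed

lemma d_x:
  assumes pm: "perfect_matching G M"
  shows "dH M xb = kx M"
proof -
  have phix: "\<And>w. phi w = xb \<longleftrightarrow> w \<in> Xb" unfolding phi_def by auto
  have "{g \<in> M \<inter> edges H. xb \<in> ends H g} = M \<inter> cut G Xb"
  proof (intro set_eqI iffI)
    fix g assume g: "g \<in> {g \<in> M \<inter> edges H. xb \<in> ends H g}"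
    then have gE: "g \<in> edges G" "\<not> ends G g \<subseteq> Xb" unfolding H_edges by auto
    obtain w where "w \<in> ends G g" "phi w = xb" using g unfolding H_ends by auto
    then have "ends G g \<inter> Xb \<noteq> {}" using phix by auto
    then show "g \<in> M \<inter> cut G Xb" using meet_cut[OF gE(1) XbV] gE g unfolding cut_def by auto
  next
    fix g assume g: "g \<in> M \<inter> cut G Xb"
    then have gE: "g \<in> edges G" "card (ends G g \<inter> Xb) = 1" unfolding cut_def by auto
    then have h: "ends G g \<inter> Xb \<noteq> {}" "\<not> ends G g \<subseteq> Xb" using meet_cut[OF gE(1) XbV] by auto
    then have "\<not> ends G g \<subseteq> Yb" using XYb by auto
    then have "g \<in> edges H" unfolding H_edges using gE h by auto
    moreover have "xb \<in> ends H g"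
    proof -
      obtain w where "w \<in> ends G g" "w \<in> Xb" using h by auto
      then show ?thesis using phix[of w] unfolding H_ends by (metis rev_image_eqI)
    qed
    ultimately show "g \<in> {g \<in> M \<inter> edges H. xb \<in> ends H g}" using g by auto
  qed
  then show ?thesis unfolding dH_def kx_def by simp
qed

lemma d_y:
  assumes pm: "perfect_matching G M"
  shows "dH M yb = ky M"
proof -
  have phiy: "\<And>w. phi w = yb \<longleftrightarrow> w \<in> Yb" using XYb unfolding phi_def by auto
  have "{g \<in> M \<inter> edges H. yb \<in> ends H g} = M \<inter> cut G Yb"
  proof (intro set_eqI iffI)
    fix g assume g: "g \<in> {g \<in> M \<inter> edges H. yb \<in> ends H g}"
    then have gE: "g \<in> edges G" "\<not> ends G g \<subseteq> Yb" unfolding H_edges by auto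
    obtain w where "w \<in> ends G g" "phi w = yb" using g unfolding H_ends by auto
    then have "ends G g \<inter> Yb \<noteq> {}" using phiy by auto
    then show "g \<in> M \<inter> cut G Yb" using meet_cut[OF gE(1) YbV] gE g unfolding cut_def by auto
  next
    fix g assume g: "g \<in> M \<inter> cut G Yb"
    then have gE: "g \<in> edges G" "card (ends G g \<inter> Yb) = 1" unfolding cut_def by auto
    then have h: "ends G g \<inter> Yb \<noteq> {}" "\<not> ends G g \<subseteq> Yb" using meet_cut[OF gE(1) YbV] by auto
    then have "\<not> ends G g \<subseteq> Xb" using XYb by auto
    then have "g \<in> edges H" unfolding H_edges using gE h by auto
    moreover have "yb \<in> ends H g"
    proof -
      obtain w where "w \<in> ends G g" "w \<in> Yb" using h by auto
      then show ?thesis using phiy[of w] unfolding H_ends by (metis rev_image_eqI)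
    qed
    ultimately show "g \<in> {g \<in> M \<inter> edges H. yb \<in> ends H g}" using g by auto
  qed
  then show ?thesis unfolding dH_def ky_def by simp
qed

lemma finH: "finite (verts H)" "finite (edges H)" using wfH unfolding wf_graph_def by auto

lemma sum_d:
  assumes pm: "perfect_matching G M" and W: "W \<subseteq> verts H"
  shows "(\<Sum>w\<in>W. dH M w) = card (W - {xb, yb}) + (if xb \<in> W then kx M else 0) + (if yb \<in> W then ky M else 0)"
proof -
  have fW: "finite W" using W finH finite_subset by blast
  have "(\<Sum>w\<in>W. dH M w) = (\<Sum>w\<in>W \<inter> {xb, yb}. dH M w) + (\<Sum>w\<in>W - {xb, yb}. dH M w)"
    using sum.Int_Diff[OF fW] .
  moreover have "(\<Sum>w\<in>W - {xb, yb}. dH M w) = (\<Sum>w\<in>W - {xb, yb}. 1)"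
  proof (rule sum.cong[OF refl])
    fix w assume "w \<in> W - {xb, yb}"
    then obtain v where "v \<in> X \<inter> Y" "w = Some (Some v)" using W unfolding H_verts by auto
    then show "dH M w = 1" using d_mid[OF pm] by simp
  qed
  moreover have "(\<Sum>w\<in>W \<inter> {xb, yb}. dH M w) = (if xb \<in> W then kx M else 0) + (if yb \<in> W then ky M else 0)"
    using d_x[OF pm] d_y[OF pm]
    by (cases "xb \<in> W"; cases "yb \<in> W") (auto simp: Int_insert_right)
  ultimately show ?thesis by simp
qed

end


context ctx begin

lemma bipH': "bipartite H" using bipH unfolding H_def .
lemma mcH': "matching_covered H" using mcH unfolding H_def .

definition "A = (SOME A. A \<subseteq> verts H \<and> xb \<in> A \<and> (\<forall>g\<in>edges H. card (ends H g \<inter> A) = 1))"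
definition "B = verts H - A"

lemma xbH: "xb \<in> verts H" and ybH: "yb \<in> verts H" unfolding H_verts by auto

lemma A_ex: "\<exists>A. A \<subseteq> verts H \<and> xb \<in> A \<and> (\<forall>g\<in>edges H. card (ends H g \<inter> A) = 1)"
proof -
  obtain A0 where A0: "A0 \<subseteq> verts H" "\<forall>g\<in>edges H. card (ends H g \<inter> A0) = 1"
    using bipH' unfolding bipartite_def by blast
  show ?thesis
  proof (cases "xb \<in> A0")
    case True then show ?thesis using A0 by blast
  next
    case False
    then show ?thesis using A0 bip_other[OF wfH A0(2)] xbH by (intro exI[of _ "verts H - A0"]) auto
  qed
qed

lemma A_props: "A \<subseteq> verts H" "xb \<in> A" "\<forall>g\<in>edges H. card (ends H g \<inter> A) = 1"
  using someI_ex[OF A_ex] unfolding A_def[symmetric] by auto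

lemma B_props: "B \<subseteq> verts H" "\<forall>g\<in>edges H. card (ends H g \<inter> B) = 1" "A \<inter> B = {}" "A \<union> B = verts H"
  using bip_other[OF wfH A_props(3)] A_props(1) unfolding B_def by auto

lemma finAB: "finite A" "finite B" using A_props(1) B_props(1) finH finite_subset by blast+

lemma pmG_ex: "\<exists>M. perfect_matching G M"
  using mc_pm brG unfolding brick_def by blast

lemma card_AB: "card A = card B"
proof -
  obtain M0 where M0: "perfect_matching H M0" using mc_pm[OF mcH'] by blast
  have M0E: "M0 \<subseteq> edges H" using M0 unfolding perfect_matching_def by blast
  have "card A = (\<Sum>w\<in>A. card {g\<in>M0. w \<in> ends H g})"
    using pm_deg[OF M0] A_props(1) by (simp add: subset_iff)
  also have "\<dots> = card M0" using bip_sum[OF wfH A_props(3) A_props(1) M0E] .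
  also have "\<dots> = (\<Sum>w\<in>B. card {g\<in>M0. w \<in> ends H g})" using bip_sum[OF wfH B_props(2) B_props(1) M0E] ..
  also have "\<dots> = card B" using pm_deg[OF M0] B_props(1) by (simp add: subset_iff)
  finally show ?thesis .
qed

lemma sumA: "perfect_matching G M \<Longrightarrow> (\<Sum>w\<in>A. dH M w) = card (M \<inter> edges H)"
  unfolding dH_def using bip_sum[OF wfH A_props(3) A_props(1)] by blast
lemma sumB: "perfect_matching G M \<Longrightarrow> (\<Sum>w\<in>B. dH M w) = card (M \<inter> edges H)"
  unfolding dH_def using bip_sum[OF wfH B_props(2) B_props(1)] by blast

lemma yb_notA: "yb \<notin> A"
proof
  assume yA: "yb \<in> A"
  have "kx M = 1" if pm: "perfect_matching G M" for M
  proof -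
    have "(\<Sum>w\<in>A. dH M w) = (\<Sum>w\<in>B. dH M w)" using sumA[OF pm] sumB[OF pm] by simp
    moreover have "(\<Sum>w\<in>A. dH M w) = card (A - {xb, yb}) + kx M + ky M"
      using sum_d[OF pm A_props(1)] yA A_props(2) by simp
    moreover have "(\<Sum>w\<in>B. dH M w) = card B"
    proof -
      have "xb \<notin> B" "yb \<notin> B" using yA A_props(2) B_props(3) by auto
      then have "B - {xb, yb} = B" by auto
      then show ?thesis using sum_d[OF pm B_props(1)] \<open>xb \<notin> B\<close> \<open>yb \<notin> B\<close> by simp
    qed
    moreover have "card (A - {xb, yb}) = card A - 2" using yA A_props(2) finAB(1) by (simp add: card_Diff_subset)
    moreover have "card A \<ge> 2"
    proof -
      have s: "{xb, yb} \<subseteq> A" using yA A_props(2) by auto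
      show ?thesis using card_mono[OF finAB(1) s] by simp
    qed
    ultimately have "kx M + ky M = 2" using card_AB by linarith
    moreover have "odd (kx M)" "odd (ky M)" using kx_odd[OF pm] ky_odd[OF pm] by auto
    ultimately show ?thesis by presburger
  qed
  then show False using tightX_False by blast
qed

lemma yb_B: "yb \<in> B" using yb_notA ybH unfolding B_def by auto

lemma kx_ky: assumes pm: "perfect_matching G M" shows "kx M = ky M"
proof -
  have "(\<Sum>w\<in>A. dH M w) = (\<Sum>w\<in>B. dH M w)" using sumA[OF pm] sumB[OF pm] by simp
  moreover have "(\<Sum>w\<in>A. dH M w) = card (A - {xb}) + kx M"
  proof -
    have "A - {xb, yb} = A - {xb}" using yb_notA by auto
    then show ?thesis using sum_d[OF pm A_props(1)] yb_notA A_props(2) by simp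
  qed
  moreover have "(\<Sum>w\<in>B. dH M w) = card (B - {yb}) + ky M"
  proof -
    have "xb \<notin> B" using A_props(2) B_props(3) by auto
    then have "B - {xb, yb} = B - {yb}" by auto
    then show ?thesis using sum_d[OF pm B_props(1)] yb_B \<open>xb \<notin> B\<close> by simp
  qed
  moreover have "card (A - {xb}) = card A - 1" "card (B - {yb}) = card B - 1"
    using A_props(2) yb_B finAB by auto
  moreover have "card A \<ge> 1" "card B \<ge> 1" using A_props(2) yb_B finAB by (auto simp: Suc_le_eq card_gt_0_iff)
  ultimately show ?thesis using card_AB by linarith
qed

end


context ctx begin

lemma core_count:
  assumes S: "S \<subseteq> A" "xb \<in> S" and T: "T \<subseteq> B" "card T = card S + 1"
    and nb: "\<forall>g\<in>edges H. ends H g \<inter> S \<noteq> {} \<longrightarrow> ends H g \<subseteq> S \<union> T"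
    and pm: "perfect_matching G M"
  shows "card (M \<inter> cut G (lift (S \<union> T))) = 1"
proof -
  define F where "F = M \<inter> edges H"
  have FE: "F \<subseteq> edges H" unfolding F_def by auto
  have SV: "S \<subseteq> verts H" and TV: "T \<subseteq> verts H" using S T A_props B_props by auto
  have UV: "S \<union> T \<subseteq> verts H" using SV TV by auto
  have fS: "finite S" and fT: "finite T" using SV TV finH finite_subset by blast+
  have dST: "S \<inter> T = {}" using S T B_props(3) by auto
  have dU: "(\<Sum>w\<in>S \<union> T. dH M w) = 2 * card {g\<in>F. ends H g \<subseteq> S \<union> T} + card (F \<inter> cut H (S \<union> T))"
    unfolding dH_def F_def[symmetric] using degsum[OF wfH FE UV] .
  have dS: "(\<Sum>w\<in>S. dH M w) = 2 * card {g\<in>F. ends H g \<subseteq> S} + card (F \<inter> cut H S)"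
    unfolding dH_def F_def[symmetric] using degsum[OF wfH FE SV] .
  have e1: "{g\<in>F. ends H g \<subseteq> S} = {}"
  proof -
    { fix g assume g: "g \<in> F" "ends H g \<subseteq> S"
      then have gE: "g \<in> edges H" using FE by auto
      have "ends H g \<inter> A = ends H g" using g S by auto
      then have False using A_props(3) gE wf_edge(2)[OF wfH gE] by auto }
    then show ?thesis by auto
  qed
  have e2: "{g\<in>F. ends H g \<subseteq> S \<union> T} = F \<inter> cut H S"
  proof (intro set_eqI iffI)
    fix g assume g: "g \<in> {g\<in>F. ends H g \<subseteq> S \<union> T}"
    then have gE: "g \<in> edges H" using FE by auto
    have "ends H g \<inter> A = ends H g \<inter> S" using g S T B_props(3) by auto
    then show "g \<in> F \<inter> cut H S" using A_props(3) gE g unfolding cut_def by auto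
  next
    fix g assume g: "g \<in> F \<inter> cut H S"
    then have "ends H g \<inter> S \<noteq> {}" "g \<in> edges H" unfolding cut_def by auto
    then show "g \<in> {g\<in>F. ends H g \<subseteq> S \<union> T}" using nb g by auto
  qed
  have sU: "(\<Sum>w\<in>S \<union> T. dH M w) = (\<Sum>w\<in>S. dH M w) + (\<Sum>w\<in>T. dH M w)"
    using sum.union_disjoint[OF fS fT dST] .
  have ybS: "yb \<notin> S" using S yb_notA by auto
  have xbT: "xb \<notin> T" using T A_props(2) B_props(3) by auto
  have sS: "(\<Sum>w\<in>S. dH M w) = card S - 1 + kx M"
  proof -
    have "S - {xb, yb} = S - {xb}" using ybS by auto
    then show ?thesis using sum_d[OF pm SV] S(2) ybS fS by simp
  qed
  have cS: "card S \<ge> 1" using S(2) fS by (auto simp: Suc_le_eq card_gt_0_iff)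
  have odd: "odd (kx M)" using kx_odd[OF pm] .
  have kk: "kx M = ky M" using kx_ky[OF pm] .
  define c where "c = card (F \<inter> cut H (S \<union> T))"
  have main: "(\<Sum>w\<in>S. dH M w) + (\<Sum>w\<in>T. dH M w) = 2 * (\<Sum>w\<in>S. dH M w) + c"
    using dU dS e1 e2 sU unfolding c_def by simp
  have c1: "c = 1"
  proof (cases "yb \<in> T")
    case True
    have "T - {xb, yb} = T - {yb}" using xbT by auto
    then have "(\<Sum>w\<in>T. dH M w) = card (T - {yb}) + ky M" using sum_d[OF pm TV] True xbT by simp
    moreover have "card (T - {yb}) = card T - 1" using True fT by simp
    ultimately show ?thesis using main sS T(2) cS kk by linarith
  next
    case False
    have "T - {xb, yb} = T" using xbT False by auto
    then have "(\<Sum>w\<in>T. dH M w) = card T" using sum_d[OF pm TV] False xbT by simp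
    then have "kx M + c = 2" using main sS T(2) cS by linarith
    then show ?thesis using odd by presburger
  qed
  have "cut H (S \<union> T) \<subseteq> edges H" unfolding cut_def by auto
  then have "M \<inter> cut G (lift (S \<union> T)) = F \<inter> cut H (S \<union> T)"
    using lift_cut[OF UV] unfolding F_def by auto
  then show ?thesis using c1 c_def by simp
qed

lemma core_contra:
  assumes S: "S \<subseteq> A" "xb \<in> S" and T: "T \<subseteq> B" "card T = card S + 1"
    and nb: "\<forall>g\<in>edges H. ends H g \<inter> S \<noteq> {} \<longrightarrow> ends H g \<subseteq> S \<union> T"
    and nd: "\<not> (\<exists>w\<in>X \<inter> Y. verts H - (S \<union> T) = {Some (Some w)})"
  shows False
proof -
  have SV: "S \<subseteq> verts H" and TV: "T \<subseteq> verts H" using S T A_props B_props by auto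
  have UV: "S \<union> T \<subseteq> verts H" using SV TV by auto
  have fS: "finite S" and fT: "finite T" using SV TV finH finite_subset by blast+
  have dST: "S \<inter> T = {}" using S T B_props(3) by auto
  have tight: "tight_cut G (lift (S \<union> T))" unfolding tight_cut_def using core_count[OF S T nb] by blast
  have LV: "lift (S \<union> T) \<subseteq> verts G" unfolding lift_def by auto
  have "trivial_cut G (lift (S \<union> T))" using brG tight LV unfolding brick_def by blast
  then have triv: "card (lift (S \<union> T)) = 1 \<or> card (lift (verts H - (S \<union> T))) = 1"
    unfolding trivial_cut_def lift_compl .
  have cS: "card S \<ge> 1" using S(2) fS by (auto simp: Suc_le_eq card_gt_0_iff)
  have "card (S \<union> T) \<ge> 3" using card_Un_disjoint[OF fS fT dST] T(2) cS by simp
  then have c1: "card (lift (S \<union> T)) \<noteq> 1" using lift_card[OF UV] by simp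
  define R where "R = verts H - (S \<union> T)"
  have RV: "R \<subseteq> verts H" unfolding R_def by auto
  have fR: "finite R" using RV finH finite_subset by blast
  have "card (lift R) \<noteq> 1"
  proof (cases "card R = 1")
    case False
    show ?thesis
    proof (cases "card R = 0")
      case True
      then have "R = {}" using fR by simp
      then show ?thesis unfolding lift_def by simp
    next
      case F0: False
      then show ?thesis using lift_card[OF RV] False by simp
    qed
  next
    case True
    then obtain w where w: "R = {w}" using card_1_singletonE by blast
    then have wV: "w \<in> verts H" and wx: "w \<noteq> xb" using RV S(2) unfolding R_def by auto
    show ?thesis
    proof (cases "w = yb")
      case True
      then have "lift R = Yb" using w lift_yb by simp
      then show ?thesis using brick_not_card1[OF brY wfG YV] YbY by simp
    next
      case False
      then obtain v where "v \<in> X \<inter> Y" "w = Some (Some v)" using wV wx unfolding H_verts by auto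
      then show ?thesis using nd w unfolding R_def by blast
    qed
  qed
  then show False using triv c1 unfolding R_def by blast
qed

end


context ctx begin

lemma cutYb: "cut G Yb = {g \<in> edges H. yb \<in> ends H g}"
proof -
  have phiy: "\<And>w. phi w = yb \<longleftrightarrow> w \<in> Yb" using XYb unfolding phi_def by auto
  show ?thesis
  proof (intro set_eqI iffI)
    fix g assume g: "g \<in> {g \<in> edges H. yb \<in> ends H g}"
    then have gE: "g \<in> edges G" "\<not> ends G g \<subseteq> Yb" unfolding H_edges by auto
    obtain w where "w \<in> ends G g" "phi w = yb" using g unfolding H_ends by auto
    then have "ends G g \<inter> Yb \<noteq> {}" using phiy by auto
    then show "g \<in> cut G Yb" using meet_cut[OF gE(1) YbV] gE g unfolding cut_def by auto
  next
    fix g assume g: "g \<in> cut G Yb"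
    then have gE: "g \<in> edges G" "card (ends G g \<inter> Yb) = 1" unfolding cut_def by auto
    then have h: "ends G g \<inter> Yb \<noteq> {}" "\<not> ends G g \<subseteq> Yb" using meet_cut[OF gE(1) YbV] by auto
    then have "\<not> ends G g \<subseteq> Xb" using XYb by auto
    then have "g \<in> edges H" unfolding H_edges using gE h by auto
    moreover have "yb \<in> ends H g"
    proof -
      obtain w where "w \<in> ends G g" "w \<in> Yb" using h by auto
      then show ?thesis using phiy[of w] unfolding H_ends by (metis rev_image_eqI)
    qed
    ultimately show "g \<in> {g \<in> edges H. yb \<in> ends H g}" by auto
  qed
qed

lemma two_elems:
  assumes "card E = 2" "a \<in> E" "b \<in> E" "a \<noteq> b"
  shows "E = {a, b}"
proof -
  have f: "finite E" using assms(1) by (intro card_ge_0_finite) auto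
  have "{a, b} \<subseteq> E" using assms by auto
  moreover have "card {a, b} = card E" using assms by simp
  ultimately show ?thesis using card_subset_eq[OF f] by metis
qed

lemma phi_mid: "w0 \<in> X \<inter> Y \<Longrightarrow> phi x = Some (Some w0) \<longleftrightarrow> x = w0"
  unfolding phi_def Xb_def Yb_def using XV by auto

lemma mid_in_ends:
  assumes "w0 \<in> X \<inter> Y" "Some (Some w0) \<in> ends H g"
  shows "w0 \<in> ends G g"
proof -
  obtain x where "x \<in> ends G g" "phi x = Some (Some w0)" using assms(2) unfolding H_ends by auto
  then show ?thesis using phi_mid[OF assms(1)] by auto
qed

lemma degen_yb:
  assumes w0: "w0 \<in> X \<inter> Y"
    and nb: "\<forall>g\<in>edges H. yb \<in> ends H g \<longrightarrow> g = e \<or> ends H g = {Some (Some w0), yb}"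
  shows False
proof -
  have "ky M = 1" if pm: "perfect_matching G M" for M
  proof -
    have w0V: "w0 \<in> verts G" using w0 XV by auto
    have "M \<inter> cut G Yb \<subseteq> {e} \<union> {g \<in> M. w0 \<in> ends G g}"
    proof
      fix g assume g: "g \<in> M \<inter> cut G Yb"
      then have "g \<in> edges H" "yb \<in> ends H g" using cutYb by auto
      then have "g = e \<or> Some (Some w0) \<in> ends H g" using nb by auto
      then show "g \<in> {e} \<union> {g \<in> M. w0 \<in> ends G g}" using g mid_in_ends[OF w0] by auto
    qed
    moreover have "card ({e} \<union> {g \<in> M. w0 \<in> ends G g}) \<le> 2"
      using card_Un_le[of "{e}" "{g \<in> M. w0 \<in> ends G g}"] pm_deg[OF pm w0V] by simp
    moreover have "finite ({e} \<union> {g \<in> M. w0 \<in> ends G g})"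
      using pmE[OF pm] finV(2) by (auto intro: finite_subset)
    ultimately have "ky M \<le> 2" unfolding ky_def by (meson card_mono le_trans)
    then show ?thesis using ky_odd[OF pm] by presburger
  qed
  then show False using tightY_False by blast
qed

lemma Xb_big: "card Xb \<ge> 3"
proof -
  have "odd (card Xb)" using brick_odd[OF brX wfG] XbX by simp
  moreover have "card Xb \<noteq> 1" using brick_not_card1[OF brX wfG XV] XbX by simp
  moreover have "card Xb \<noteq> 0" using Xbne XbV finV finite_subset by fastforce
  ultimately show ?thesis by presburger
qed

lemma degen_mid:
  assumes eH: "e \<in> edges H" and ee: "ends H e = {xb, Some (Some b0)}"
    and b0: "b0 \<in> X \<inter> Y" and w0: "w0 \<in> X \<inter> Y" and bw: "b0 \<noteq> w0"
    and nb: "\<forall>g\<in>edges H. Some (Some b0) \<in> ends H g \<longrightarrow> g = e \<or> ends H g = {Some (Some w0), Some (Some b0)}"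
  shows False
proof -
  have eG: "e \<in> edges G" using eH unfolding H_edges by auto
  obtain p where p: "p \<in> ends G e" "phi p = xb" using ee unfolding H_ends by (metis imageE insertI1)
  have pX: "p \<in> Xb" using p(2) unfolding phi_def by (auto split: if_splits)
  have b0e: "b0 \<in> ends G e" using mid_in_ends[OF b0] ee by auto
  have b0n: "b0 \<notin> Xb" "b0 \<notin> Yb" "w0 \<notin> Xb" "w0 \<notin> Yb" using b0 w0 unfolding Xb_def Yb_def by auto
  have pb: "p \<noteq> b0" using pX b0n by auto
  have b0V: "b0 \<in> verts G" "w0 \<in> verts G" "p \<in> verts G" using b0 w0 XV pX XbV by auto
  have atb0: "ends G g \<subseteq> {p, b0, w0}" if g: "g \<in> edges G" "b0 \<in> ends G g" for g
  proof -
    have gH: "g \<in> edges H" unfolding H_edges using g b0n by auto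
    have "phi b0 = Some (Some b0)" using phi_mid[OF b0] by simp
    then have "Some (Some b0) \<in> ends H g" using g(2) unfolding H_ends by (metis rev_image_eqI)
    then have "g = e \<or> ends H g = {Some (Some w0), Some (Some b0)}" using nb gH by auto
    then show ?thesis
    proof
      assume "g = e"
      have "ends G e = {p, b0}" using two_elems[OF wf_edge(2)[OF wfG eG] p(1) b0e pb] .
      then show ?thesis using \<open>g = e\<close> by auto
    next
      assume h: "ends H g = {Some (Some w0), Some (Some b0)}"
      then have "w0 \<in> ends G g" using mid_in_ends[OF w0] by auto
      then have "ends G g = {w0, b0}" using two_elems[OF wf_edge(2)[OF wfG g(1)] _ g(2)] bw by metis
      then show ?thesis by auto
    qed
  qed
  define Q where "Q = {p, b0, w0}"
  have QV: "Q \<subseteq> verts G" using b0V unfolding Q_def by auto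
  have pw: "p \<noteq> w0" using pX b0n by auto
  have cQ: "card Q = 3" using pb bw pw unfolding Q_def by simp
  have tight: "tight_cut G Q" unfolding tight_cut_def
  proof (intro allI impI)
    fix M assume pm: "perfect_matching G M"
    have cnt: "card Q = 2 * card {g\<in>M. ends G g \<subseteq> Q} + card (M \<inter> cut G Q)"
      using pm_count[OF wfG pm QV] .
    obtain g0 where g0: "g0 \<in> M" "b0 \<in> ends G g0"
      using pm_deg[OF pm b0V(1)] by (metis (no_types, lifting) One_nat_def card.empty empty_Collect_eq zero_neq_one)
    have "ends G g0 \<subseteq> Q" using atb0[of g0] g0 pmE[OF pm] unfolding Q_def by auto
    then have "g0 \<in> {g\<in>M. ends G g \<subseteq> Q}" using g0 by auto
    moreover have "finite {g\<in>M. ends G g \<subseteq> Q}" using pmE[OF pm] finV(2) by (auto intro: finite_subset)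
    ultimately have "card {g\<in>M. ends G g \<subseteq> Q} \<ge> 1" by (metis One_nat_def Suc_leI card_gt_0_iff empty_iff)
    then show "card (M \<inter> cut G Q) = 1" using cnt cQ by presburger
  qed
  have "card (verts G - Q) \<noteq> 1"
  proof -
    have "Xb - {p} \<subseteq> verts G - Q" using XbV b0n unfolding Q_def by auto
    moreover have "card (Xb - {p}) \<ge> 2" using Xb_big pX by simp
    moreover have "finite (verts G - Q)" using finV by auto
    ultimately show ?thesis by (metis card_mono le_trans numeral_le_one_iff semiring_norm(69))
  qed
  then show False using brG tight QV cQ unfolding brick_def trivial_cut_def by auto
qed

end



lemma pm_intro:
  assumes "M \<subseteq> edges K" "\<forall>z\<in>verts K. \<exists>g\<in>M. z \<in> ends K g"
    "\<forall>g1\<in>M. \<forall>g2\<in>M. g1 \<noteq> g2 \<longrightarrow> ends K g1 \<inter> ends K g2 = {}"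
  shows "perfect_matching K M"
  unfolding perfect_matching_def
proof (intro conjI ballI assms(1))
  fix z assume z: "z \<in> verts K"
  then obtain g where g: "g \<in> M" "z \<in> ends K g" using assms(2) by blast
  show "\<exists>!e. e \<in> M \<and> z \<in> ends K e"
  proof (rule ex1I[of _ g])
    show "g \<in> M \<and> z \<in> ends K g" using g by blast
  next
    fix h assume "h \<in> M \<and> z \<in> ends K h"
    then show "h = g" using assms(3) g by blast
  qed
qed

context ctx begin

lemma edge_AB:
  assumes g: "g \<in> edges H"
  obtains a w where "a \<in> A" "w \<in> B" "ends H g = {a, w}"
proof -
  have c2: "card (ends H g) = 2" and sV: "ends H g \<subseteq> verts H" using wf_edge[OF wfH g] by auto
  obtain a where a: "ends H g \<inter> A = {a}" using A_props(3) g card_1_singletonE by blast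
  obtain w where w: "ends H g \<inter> B = {w}" using B_props(2) g card_1_singletonE by blast
  have "a \<noteq> w" using a w B_props(3) by auto
  then have "ends H g = {a, w}" using two_elems[OF c2] a w by auto
  moreover have "a \<in> A" "w \<in> B" using a w by auto
  ultimately show ?thesis using that by blast
qed

lemma pm_uniq:
  assumes "perfect_matching K M" "z \<in> verts K" "g1 \<in> M" "g2 \<in> M" "z \<in> ends K g1" "z \<in> ends K g2"
  shows "g1 = g2"
proof -
  have "card {g\<in>M. z \<in> ends K g} = 1" using pm_deg[OF assms(1,2)] .
  then obtain g where gg: "{g\<in>M. z \<in> ends K g} = {g}" using card_1_singletonE by blast
  have "g1 \<in> {g\<in>M. z \<in> ends K g}" "g2 \<in> {g\<in>M. z \<in> ends K g}" using assms(3-6) by auto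
  then show ?thesis unfolding gg by simp
qed

definition "Nb e v a = {w \<in> B - {v}. \<exists>g\<in>edges H - {e}. ends H g = {a, w}}"

lemma hall_pm:
  assumes fH: "f \<in> edges H" and fe: "f \<noteq> e" and fuv: "ends H f = {u, v}" and u: "u \<in> A" and v: "v \<in> B"
    and inj: "inj_on \<sigma> (A - {u})" and sig: "\<forall>a\<in>A - {u}. \<sigma> a \<in> Nb e v a"
  shows "\<exists>M. perfect_matching H M \<and> f \<in> M \<and> e \<notin> M"
proof -
  define ch where "ch a = (SOME g. g \<in> edges H - {e} \<and> ends H g = {a, \<sigma> a})" for a
  have ch: "ch a \<in> edges H - {e}" "ends H (ch a) = {a, \<sigma> a}" "\<sigma> a \<in> B - {v}" if "a \<in> A - {u}" for a
  proof -
    have "\<exists>g. g \<in> edges H - {e} \<and> ends H g = {a, \<sigma> a}" "\<sigma> a \<in> B - {v}" using sig that unfolding Nb_def by auto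
    then show "ch a \<in> edges H - {e}" "ends H (ch a) = {a, \<sigma> a}" "\<sigma> a \<in> B - {v}"
      unfolding ch_def using someI_ex by (metis (mono_tags, lifting))+
  qed
  have AB: "\<And>x. x \<in> A \<Longrightarrow> x \<notin> B" using B_props(3) by auto
  have img: "\<sigma> ` (A - {u}) = B - {v}"
  proof -
    have sub: "\<sigma> ` (A - {u}) \<subseteq> B - {v}" using ch(3) by auto
    have "card (\<sigma> ` (A - {u})) = card (A - {u})" using card_image[OF inj] .
    also have "\<dots> = card (B - {v})" using u v card_AB finAB by simp
    finally show ?thesis using sub finAB(2) by (meson card_subset_eq finite_Diff)
  qed
  define M where "M = insert f (ch ` (A - {u}))"
  have pm: "perfect_matching H M"
  proof (rule pm_intro)
    show "M \<subseteq> edges H" unfolding M_def using fH ch(1) by auto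
  next
    show "\<forall>z\<in>verts H. \<exists>g\<in>M. z \<in> ends H g"
    proof
      fix z assume z: "z \<in> verts H"
      show "\<exists>g\<in>M. z \<in> ends H g"
      proof (cases "z = u \<or> z = v")
        case True then show ?thesis unfolding M_def using fuv by auto
      next
        case False
        then have "z \<in> A - {u} \<or> z \<in> B - {v}" using z B_props(4) by auto
        then show ?thesis
        proof
          assume "z \<in> A - {u}" then show ?thesis unfolding M_def using ch(2) by blast
        next
          assume "z \<in> B - {v}"
          then obtain a where "a \<in> A - {u}" "z = \<sigma> a" using img by (metis imageE)
          then show ?thesis unfolding M_def using ch(2) by blast
        qed
      qed
    qed
  next
    have d1: "ends H f \<inter> ends H (ch a) = {}" if a: "a \<in> A - {u}" for a
      using ch[OF a] fuv a u v AB by auto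
    have d2: "ends H (ch a) \<inter> ends H (ch a') = {}" if a: "a \<in> A - {u}" "a' \<in> A - {u}" "ch a \<noteq> ch a'" for a a'
    proof -
      have "a \<noteq> a'" using a(3) by auto
      then have "\<sigma> a \<noteq> \<sigma> a'" using inj a by (meson inj_on_def)
      then show ?thesis using ch(2,3)[OF a(1)] ch(2,3)[OF a(2)] a(1,2) \<open>a \<noteq> a'\<close> AB by auto
    qed
    show "\<forall>g1\<in>M. \<forall>g2\<in>M. g1 \<noteq> g2 \<longrightarrow> ends H g1 \<inter> ends H g2 = {}"
      unfolding M_def using d1 d2 by (auto simp: Int_commute)
  qed
  moreover have "e \<notin> M" unfolding M_def using fe ch(1) by auto
  ultimately show ?thesis unfolding M_def by blast
qed

end


context ctx begin

lemma hall_fail: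
  assumes eH: "e \<in> edges H" and ee: "ends H e = {xb, b}" and bB: "b \<in> B"
    and fH: "f \<in> edges H" and fe: "f \<noteq> e" and fuv: "ends H f = {u, v}" and u: "u \<in> A" and v: "v \<in> B"
    and S: "S \<subseteq> A - {u}" and small: "card (\<Union>(Nb e v ` S)) < card S"
  shows False
proof -
  define N where "N = \<Union>(Nb e v ` S)"
  have AB: "\<And>x. x \<in> A \<Longrightarrow> x \<notin> B" using B_props(3) by auto
  have NB: "N \<subseteq> B - {v}" unfolding N_def Nb_def by auto
  have fN: "finite N" using NB finAB(2) finite_subset by blast
  have SA: "S \<subseteq> A" using S by auto
  have SV: "S \<subseteq> verts H" using SA A_props(1) by auto
  have fS: "finite S" using SA finAB(1) finite_subset by blast
  obtain M1 where M1: "perfect_matching H M1" "f \<in> M1"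
    using mcH' fH unfolding matching_covered_def by blast
  have M1E: "M1 \<subseteq> edges H" using M1(1) unfolding perfect_matching_def by blast
  define E1 where "E1 = M1 \<inter> cut H S"
  have fE1: "finite E1" unfolding E1_def using M1E finH(2) finite_subset by blast
  have cE1: "card E1 = card S"
  proof -
    have e0: "{g\<in>M1. ends H g \<subseteq> S} = {}"
    proof -
      { fix g assume g: "g \<in> M1" "ends H g \<subseteq> S"
        then have gE: "g \<in> edges H" using M1E by auto
        have "ends H g \<inter> A = ends H g" using g SA by auto
        then have False using A_props(3) gE wf_edge(2)[OF wfH gE] by auto }
      then show ?thesis by auto
    qed
    have "card S = 2 * card {g\<in>M1. ends H g \<subseteq> S} + card (M1 \<inter> cut H S)"
      using pm_count[OF wfH M1(1) SV] .
    then show ?thesis unfolding E1_def e0 by simp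
  qed
  define beta where "beta g = (SOME w. w \<in> ends H g \<inter> B)" for g
  have E1_str: "\<exists>a\<in>S. beta g \<in> B \<and> ends H g = {a, beta g}" if g: "g \<in> E1" for g
  proof -
    have gE: "g \<in> edges H" and gc: "card (ends H g \<inter> S) = 1" using g unfolding E1_def cut_def by auto
    obtain a w where aw: "a \<in> A" "w \<in> B" "ends H g = {a, w}" using edge_AB[OF gE] by blast
    have "ends H g \<inter> B = {w}" using aw AB by auto
    then have bw: "beta g = w" unfolding beta_def by simp
    have "ends H g \<inter> S \<noteq> {}" using gc by auto
    then have "a \<in> S" using aw SA AB by auto
    then show ?thesis using aw bw by blast
  qed
  have inj: "inj_on beta E1"
  proof (rule inj_onI)
    fix g1 g2 assume g: "g1 \<in> E1" "g2 \<in> E1" "beta g1 = beta g2"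
    obtain a1 where a1: "beta g1 \<in> B" "ends H g1 = {a1, beta g1}" using E1_str[OF g(1)] by blast
    obtain a2 where a2: "beta g2 \<in> B" "ends H g2 = {a2, beta g2}" using E1_str[OF g(2)] by blast
    show "g1 = g2"
      using pm_uniq[OF M1(1), of "beta g1" g1 g2] g a1 a2 B_props(1) unfolding E1_def by auto
  qed
  have beta_ne_v: "beta g \<noteq> v" if g: "g \<in> E1" for g
  proof
    assume bv: "beta g = v"
    obtain a where a: "a \<in> S" "beta g \<in> B" "ends H g = {a, beta g}" using E1_str[OF g] by blast
    have "g = f" using pm_uniq[OF M1(1), of v g f] g M1(2) a bv fuv v B_props(1) unfolding E1_def by auto
    then have "a \<in> {u, v}" using a fuv by auto
    then show False using a S v AB by auto
  qed
  have beta_in: "beta g \<in> N \<union> {b}" if g: "g \<in> E1" for g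
  proof -
    obtain a where a: "a \<in> S" "beta g \<in> B" "ends H g = {a, beta g}" using E1_str[OF g] by blast
    show ?thesis
    proof (cases "g = e")
      case True
      then have "{a, beta g} = {xb, b}" using a ee by simp
      then have "beta g = b" using a(2) bB A_props(2) AB by (metis doubleton_eq_iff)
      then show ?thesis by simp
    next
      case False
      have gE: "g \<in> edges H" using g M1E unfolding E1_def by auto
      have "beta g \<in> Nb e v a" unfolding Nb_def using a gE False beta_ne_v[OF g] by auto
      then show ?thesis unfolding N_def using a(1) by blast
    qed
  qed
  have sub: "beta ` E1 \<subseteq> N \<union> {b}" using beta_in by auto
  have cimg: "card (beta ` E1) = card S" using card_image[OF inj] cE1 by simp
  have fNb: "finite (N \<union> {b})" using fN by simp
  have le1: "card S \<le> card (N \<union> {b})" using card_mono[OF fNb sub] cimg by simp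
  have bN: "b \<notin> N"
  proof
    assume "b \<in> N" then have "N \<union> {b} = N" by auto
    then show False using le1 small unfolding N_def by simp
  qed
  have cN: "card N + 1 = card S" using le1 small bN fN unfolding N_def by simp
  have img: "beta ` E1 = N \<union> {b}"
    using card_subset_eq[OF fNb sub] cimg cN bN fN by simp
  obtain g0 where g0: "g0 \<in> E1" "beta g0 = b" using img by (metis UnCI imageE singletonI)
  have xbS: "xb \<in> S"
  proof -
    obtain a where a: "a \<in> S" "beta g0 \<in> B" "ends H g0 = {a, beta g0}" using E1_str[OF g0(1)] by blast
    have "g0 = e"
    proof (rule ccontr)
      assume "g0 \<noteq> e"
      have gE: "g0 \<in> edges H" using g0 M1E unfolding E1_def by auto
      have "b \<in> Nb e v a" unfolding Nb_def using a gE \<open>g0 \<noteq> e\<close> beta_ne_v[OF g0(1)] g0(2) by auto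
      then show False using bN a(1) unfolding N_def by blast
    qed
    then have "{a, b} = {xb, b}" using a ee g0(2) by simp
    then have "a = xb" using a(1) SA bB AB by (metis doubleton_eq_iff)
    then show ?thesis using a by simp
  qed
  have vb: "v \<noteq> b" using beta_ne_v[OF g0(1)] g0(2) by simp
  have vN: "v \<notin> N" using NB by auto
  define T where "T = N \<union> {v, b}"
  have TB: "T \<subseteq> B" unfolding T_def using NB v bB by auto
  have cT: "card T = card S + 1" unfolding T_def using cN vN bN vb fN by simp
  have nb: "\<forall>g\<in>edges H. ends H g \<inter> S \<noteq> {} \<longrightarrow> ends H g \<subseteq> S \<union> T"
  proof (intro ballI impI)
    fix g assume gE: "g \<in> edges H" and gS: "ends H g \<inter> S \<noteq> {}"
    obtain a w where aw: "a \<in> A" "w \<in> B" "ends H g = {a, w}" using edge_AB[OF gE] by blast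
    have aS: "a \<in> S" using gS aw SA AB by auto
    have "w \<in> T"
    proof (cases "g = e")
      case True
      then have "{a, w} = {xb, b}" using aw ee by simp
      then have "w = b" using aw bB A_props(2) AB by (metis doubleton_eq_iff)
      then show ?thesis unfolding T_def by simp
    next
      case False
      show ?thesis
      proof (cases "w = v")
        case True then show ?thesis unfolding T_def by simp
      next
        case F2: False
        have "w \<in> Nb e v a" unfolding Nb_def using aw gE False F2 by auto
        then show ?thesis unfolding T_def N_def using aS by blast
      qed
    qed
    then show "ends H g \<subseteq> S \<union> T" using aw aS by auto
  qed
  show False
  proof (cases "\<exists>w\<in>X \<inter> Y. verts H - (S \<union> T) = {Some (Some w)}")
    case False
    then show False using core_contra[OF SA xbS TB cT nb] by blast
  next
    case True
    then obtain w0 where w0: "w0 \<in> X \<inter> Y" "verts H - (S \<union> T) = {Some (Some w0)}" by blast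
    define z where "z = Some (Some w0)"
    have fT: "finite T" using TB finAB(2) finite_subset by blast
    have dST: "S \<inter> T = {}" using SA TB AB by auto
    have TV: "T \<subseteq> verts H" using TB B_props(1) by auto
    have zV: "verts H = (S \<union> T) \<union> {z}" and zST: "z \<notin> S \<union> T" using w0(2) SV TV unfolding z_def by auto
    have "card (verts H) = card S + card T + 1"
      using zV zST card_Un_disjoint[OF fS fT dST] fS fT by simp
    moreover have "card (verts H) = card A + card B"
      using B_props(3,4) finAB card_Un_disjoint by metis
    ultimately have "card B = card T" using card_AB cT by simp
    then have BT: "B = T" using card_subset_eq[OF finAB(2) TB] by simp
    have zA: "z \<in> A" using zV zST BT B_props(4) by auto
    have uz: "u = z" using u S zV BT AB A_props(1) by blast
    have bnb: "\<forall>g\<in>edges H. b \<in> ends H g \<longrightarrow> g = e \<or> ends H g = {z, b}"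
    proof (intro ballI impI)
      fix g assume gE: "g \<in> edges H" and bg: "b \<in> ends H g"
      obtain a w where aw: "a \<in> A" "w \<in> B" "ends H g = {a, w}" using edge_AB[OF gE] by blast
      have wb: "w = b" using aw bg bB AB by auto
      show "g = e \<or> ends H g = {z, b}"
      proof (cases "a = z")
        case True then show ?thesis using aw wb by simp
      next
        case False
        then have aS: "a \<in> S" using aw zV BT AB A_props(1) by auto
        show ?thesis
        proof (rule ccontr)
          assume "\<not> (g = e \<or> ends H g = {z, b})"
          then have "b \<in> Nb e v a" unfolding Nb_def using aw gE wb vb bB by auto
          then show False using bN aS unfolding N_def by blast
        qed
      qed
    qed
    show False
    proof (cases "b = yb")
      case True
      then show False using degen_yb[OF w0(1), of e] bnb unfolding z_def by auto
    next
      case False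
      have "b \<in> verts H" "b \<noteq> xb" using bB B_props(1) A_props(2) AB by auto
      then obtain b0 where b0: "b0 \<in> X \<inter> Y" "b = Some (Some b0)" using False unfolding H_verts by auto
      have "b0 \<noteq> w0" using b0 zA bB AB unfolding z_def by auto
      then show False using degen_mid[OF eH _ b0(1) w0(1)] ee b0 bnb unfolding z_def by auto
    qed
  qed
qed

end


context ctx begin

lemma avoid:
  assumes eH: "e \<in> edges H" and xe: "xb \<in> ends H e" and fH: "f \<in> edges H" and fe: "f \<noteq> e"
  shows "\<exists>M. perfect_matching H M \<and> f \<in> M \<and> e \<notin> M"
proof (rule ccontr)
  assume nM: "\<not> (\<exists>M. perfect_matching H M \<and> f \<in> M \<and> e \<notin> M)"
  have AB: "\<And>x. x \<in> A \<Longrightarrow> x \<notin> B" using B_props(3) by auto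
  obtain a b where ab: "a \<in> A" "b \<in> B" "ends H e = {a, b}" using edge_AB[OF eH] by blast
  have "a = xb" using xe ab A_props(2) AB by auto
  then have ee: "ends H e = {xb, b}" using ab by simp
  obtain u v where uv: "u \<in> A" "v \<in> B" "ends H f = {u, v}" using edge_AB[OF fH] by blast
  have fI: "finite (A - {u})" using finAB by simp
  have fN: "\<forall>i\<in>A - {u}. finite (Nb e v i)" unfolding Nb_def using finAB(2) by auto
  show False
  proof (cases "\<forall>J\<subseteq>A - {u}. card J \<le> card (\<Union>(Nb e v ` J))")
    case True
    then obtain \<sigma> where "inj_on \<sigma> (A - {u})" "\<forall>i\<in>A - {u}. \<sigma> i \<in> Nb e v i"
      using hall[OF fI fN] by blast
    then show False using hall_pm[OF fH fe uv(3) uv(1) uv(2)] nM by blast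
  next
    case False
    then obtain J where "J \<subseteq> A - {u}" "card (\<Union>(Nb e v ` J)) < card J" by (meson not_le)
    then show False using hall_fail[OF eH ee ab(2) fH fe uv(3) uv(1) uv(2)] by blast
  qed
qed

lemma cutXb: "cut G Xb = {g \<in> edges H. xb \<in> ends H g}"
proof -
  have phix: "\<And>w. phi w = xb \<longleftrightarrow> w \<in> Xb" unfolding phi_def by auto
  show ?thesis
  proof (intro set_eqI iffI)
    fix g assume g: "g \<in> {g \<in> edges H. xb \<in> ends H g}"
    then have gE: "g \<in> edges G" "\<not> ends G g \<subseteq> Xb" unfolding H_edges by auto
    obtain w where "w \<in> ends G g" "phi w = xb" using g unfolding H_ends by auto
    then have "ends G g \<inter> Xb \<noteq> {}" using phix by auto
    then show "g \<in> cut G Xb" using meet_cut[OF gE(1) XbV] gE g unfolding cut_def by auto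
  next
    fix g assume g: "g \<in> cut G Xb"
    then have gE: "g \<in> edges G" "card (ends G g \<inter> Xb) = 1" unfolding cut_def by auto
    then have h: "ends G g \<inter> Xb \<noteq> {}" "\<not> ends G g \<subseteq> Xb" using meet_cut[OF gE(1) XbV] by auto
    then have "\<not> ends G g \<subseteq> Yb" using XYb by auto
    then have "g \<in> edges H" unfolding H_edges using gE h by auto
    moreover have "xb \<in> ends H g"
    proof -
      obtain w where "w \<in> ends G g" "w \<in> Xb" using h by auto
      then show ?thesis using phix[of w] unfolding H_ends by (metis rev_image_eqI)
    qed
    ultimately show "g \<in> {g \<in> edges H. xb \<in> ends H g}" by auto
  qed
qed

lemma other_edge:
  assumes eH: "e \<in> edges H" and xe: "xb \<in> ends H e"
  shows "\<exists>f\<in>edges H. f \<noteq> e"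
proof (rule ccontr)
  assume "\<not> (\<exists>f\<in>edges H. f \<noteq> e)"
  then have E1: "edges H \<subseteq> {e}" by auto
  have "kx M = 1" if pm: "perfect_matching G M" for M
  proof -
    have s1: "M \<inter> cut G Xb \<subseteq> {e}" using cutXb E1 by auto
    have "card (M \<inter> cut G Xb) \<le> card {e}" using card_mono[OF _ s1] by simp
    then have "kx M \<le> 1" unfolding kx_def by simp
    then show ?thesis using kx_odd[OF pm] by presburger
  qed
  then show False using tightX_False by blast
qed

lemma pm_del:
  assumes "perfect_matching H M" "e \<notin> M"
  shows "perfect_matching (delete_edge H e) M"
  using assms unfolding perfect_matching_def delete_edge_def by auto

lemma removable_e:
  assumes eH: "e \<in> edges H" and xe: "xb \<in> ends H e"
  shows "removable H e"
proof -
  define D where "D = delete_edge H e"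
  have Dv: "verts D = verts H" "edges D = edges H - {e}" "ends D = ends H"
    unfolding D_def delete_edge_def by auto
  have wfD: "wf_graph D" using wfH unfolding wf_graph_def Dv by auto
  have cD: "card (verts D) \<ge> 2" using mcH' unfolding matching_covered_def Dv by auto
  have covD: "\<forall>f\<in>edges D. \<exists>M. perfect_matching D M \<and> f \<in> M"
  proof
    fix f assume "f \<in> edges D"
    then have "f \<in> edges H" "f \<noteq> e" unfolding Dv by auto
    then obtain M where "perfect_matching H M" "f \<in> M" "e \<notin> M" using avoid[OF eH xe] by blast
    then show "\<exists>M. perfect_matching D M \<and> f \<in> M" using pm_del unfolding D_def by blast
  qed
  obtain f0 where f0: "f0 \<in> edges H" "f0 \<noteq> e" using other_edge[OF eH xe] by blast
  obtain M0 where M0: "perfect_matching H M0" "e \<notin> M0" using avoid[OF eH xe f0] by blast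
  obtain M1 where M1: "perfect_matching H M1" "e \<in> M1" using mcH' eH unfolding matching_covered_def by blast
  obtain a b where ab: "a \<in> A" "b \<in> B" "ends H e = {a, b}" using edge_AB[OF eH] by blast
  have xbb: "xb \<noteq> b" using ab A_props(2) B_props(3) by auto
  have "a = xb" using xe ab xbb by auto
  then have ee: "ends H e = {xb, b}" using ab by simp
  have bV: "b \<in> verts H" using ab B_props(1) by auto
  have reach: "(xb, b) \<in> (adj D)\<^sup>*"
  proof (rule ccontr)
    assume nr: "(xb, b) \<notin> (adj D)\<^sup>*"
    define C where "C = {w \<in> verts H. (xb, w) \<in> (adj D)\<^sup>*}"
    have CV: "C \<subseteq> verts H" unfolding C_def by auto
    have xC: "xb \<in> C" unfolding C_def using xbH by auto
    have bC: "b \<notin> C" unfolding C_def using nr by auto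
    have cutC: "cut H C = {e}"
    proof (intro set_eqI iffI)
      fix g assume g: "g \<in> cut H C"
      then have gE: "g \<in> edges H" and gc: "card (ends H g \<inter> C) = 1" unfolding cut_def by auto
      show "g \<in> {e}"
      proof (rule ccontr)
        assume "g \<notin> {e}"
        then have gD: "g \<in> edges D" unfolding Dv using gE by auto
        obtain p q where pq: "ends H g = {p, q}" "p \<noteq> q"
          using wf_edge(2)[OF wfH gE] by (meson card_2_iff)
        have pqV: "p \<in> verts H" "q \<in> verts H" using wf_edge(1)[OF wfH gE] pq by auto
        have "(p, q) \<in> adj D" "(q, p) \<in> adj D" unfolding adj_def using gD pq Dv by auto
        have "p \<in> C \<longleftrightarrow> q \<in> C"
        proof
          assume "p \<in> C" then show "q \<in> C" using \<open>(p, q) \<in> adj D\<close> pqV unfolding C_def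
            by (auto intro: rtrancl_into_rtrancl)
        next
          assume "q \<in> C" then show "p \<in> C" using \<open>(q, p) \<in> adj D\<close> pqV unfolding C_def
            by (auto intro: rtrancl_into_rtrancl)
        qed
        then have "ends H g \<inter> C = {} \<or> ends H g \<inter> C = {p, q}" using pq by auto
        then show False using gc pq(2) by auto
      qed
    next
      fix g assume "g \<in> {e}"
      then have "ends H g \<inter> C = {xb}" using ee xC bC by auto
      then show "g \<in> cut H C" using eH \<open>g \<in> {e}\<close> unfolding cut_def by auto
    qed
    have "card C = 2 * card {g\<in>M0. ends H g \<subseteq> C} + card (M0 \<inter> cut H C)" using pm_count[OF wfH M0(1) CV] .
    moreover have "M0 \<inter> cut H C = {}" using cutC M0(2) by auto
    moreover have "card C = 2 * card {g\<in>M1. ends H g \<subseteq> C} + card (M1 \<inter> cut H C)" using pm_count[OF wfH M1(1) CV] .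
    moreover have "M1 \<inter> cut H C = {e}" using cutC M1(2) by auto
    ultimately show False by simp presburger
  qed
  have adjsub: "adj H \<subseteq> (adj D)\<^sup>*"
  proof
    fix p assume "p \<in> adj H"
    then obtain x y g where p: "p = (x, y)" "g \<in> edges H" "ends H g = {x, y}" unfolding adj_def by auto
    show "p \<in> (adj D)\<^sup>*"
    proof (cases "g = e")
      case False
      then have "(x, y) \<in> adj D" unfolding adj_def using p Dv by auto
      then show ?thesis using p by auto
    next
      case True
      then have "{x, y} = {xb, b}" using p ee by simp
      moreover have "(b, xb) \<in> (adj D)\<^sup>*"
      proof -
        have "sym (adj D)" unfolding sym_def adj_def by (auto simp: insert_commute)
        then show ?thesis using reach by (metis rtrancl_converseI sym_conv_converse_eq)
      qed
      ultimately show ?thesis using p reach by (metis doubleton_eq_iff rtrancl.rtrancl_refl)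
    qed
  qed
  have conD: "connected_graph D"
    unfolding connected_graph_def
  proof (intro conjI ballI)
    show "verts D \<noteq> {}" using xbH Dv by auto
  next
    fix x y assume "x \<in> verts D" "y \<in> verts D"
    then have "(x, y) \<in> (adj H)\<^sup>*" using mcH' unfolding matching_covered_def connected_graph_def Dv by auto
    then show "(x, y) \<in> (adj D)\<^sup>*" using adjsub by (metis rtrancl_subset_rtrancl rtrancl_idemp subsetD)
  qed
  show ?thesis unfolding removable_def D_def[symmetric] matching_covered_def using wfD conD cD covD by blast
qed

end


theorem mainTheorem12:
  fixes G :: "('v, 'e) mgraph" and X Y :: "'v set"
  assumes "brick G"
    and "X \<subseteq> verts G" and "Y \<subseteq> verts G"
    and "verts G - X \<noteq> {}" and "verts G - Y \<noteq> {}"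
    and "(verts G - X) \<inter> (verts G - Y) = {}"
    and "brick (contract G X)" and "brick (contract G Y)"
    and "bipartite (contract (contract G (verts G - X)) (Some ` (verts G - Y)))"
    and "matching_covered (contract (contract G (verts G - X)) (Some ` (verts G - Y)))"
  shows "\<forall>e \<in> edges (contract (contract G (verts G - X)) (Some ` (verts G - Y))).
           Some None \<in> ends (contract (contract G (verts G - X)) (Some ` (verts G - Y))) e \<longrightarrow>
           removable (contract (contract G (verts G - X)) (Some ` (verts G - Y))) e"
proof -
  interpret ctx G X Y using assms by unfold_locales
  show ?thesis using removable_e unfolding H_def by blast
qed

end
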